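(* Let $G$ be a graph with no isolated vertices and $b_{tR}(G)<\infty$, and let $B$ be a $b_{tR}(G)$-set. Then $\gamma_{tR}(G)+1\le \gamma_{tR}(G-B)\le \gamma_{tR}(G)+2$. Both bounds are sharp: the upper bound is attained by the bistars $S_{p,q}$ with $q\ge p\ge 2$, and the lower bound by $S_{1,q}$ with $q\ge2$.
   Context: A TRDF on $G=(V,E)$ is a function $f:V\to\{0,1,2\}$ such that every $v$ with $f(v)=0$ has a neighbor $u$ with $f(u)=2$ and the subgraph induced by $\{v:f(v)>0\}$ has no isolated vertices; $\gamma_{tR}(G)$ is the minimum weight $\sum_v f(v)$ of a TRDF. $b_{tR}(G)$ is the minimum $|E'|$, $E'\subseteq E(G)$, such that $G-E'$ has no isolated vertices and $\gamma_{tR}(G-E')>\gamma_{tR}(G)$ ($\infty$ if none). A $b_{tR}(G)$-set is an edge set $B$ with $|B|=b_{tR}(G)$, $G-B$ without isolated vertices, and $\gamma_{tR}(G-B)>\gamma_{tR}(G)$. The bistar $S_{r,s}$ is the tree of diameter 3 whose two central vertices are adjacent to $r$ and $s$ leaves respectively. *)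

theory Defs
  imports Main "HOL-Library.Extended_Nat"
begin

definition graph :: "'a set \<Rightarrow> 'a set set \<Rightarrow> bool" where
  "graph V E \<longleftrightarrow> finite V \<and> (\<forall>e\<in>E. e \<subseteq> V \<and> card e = 2)"

definition no_isolated :: "'a set \<Rightarrow> 'a set set \<Rightarrow> bool" where
  "no_isolated V E \<longleftrightarrow> (\<forall>v\<in>V. \<exists>u. {u, v} \<in> E)"

definition trdf :: "'a set \<Rightarrow> 'a set set \<Rightarrow> ('a \<Rightarrow> nat) \<Rightarrow> bool" where
  "trdf V E f \<longleftrightarrow>
     (\<forall>v\<in>V. f v \<le> 2) \<and>
     (\<forall>v\<in>V. f v = 0 \<longrightarrow> (\<exists>u\<in>V. {u, v} \<in> E \<and> f u = 2)) \<and>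
     (\<forall>v\<in>V. f v > 0 \<longrightarrow> (\<exists>u\<in>V. {u, v} \<in> E \<and> f u > 0))"

definition weight :: "'a set \<Rightarrow> ('a \<Rightarrow> nat) \<Rightarrow> nat" where
  "weight V f = (\<Sum>v\<in>V. f v)"

definition gamma_tR :: "'a set \<Rightarrow> 'a set set \<Rightarrow> nat" where
  "gamma_tR V E = (LEAST w. \<exists>f. trdf V E f \<and> weight V f = w)"

definition btR_candidate :: "'a set \<Rightarrow> 'a set set \<Rightarrow> 'a set set \<Rightarrow> bool" where
  "btR_candidate V E E' \<longleftrightarrow> E' \<subseteq> E \<and> no_isolated V (E - E') \<and>
      gamma_tR V (E - E') > gamma_tR V E"

definition b_tR :: "'a set \<Rightarrow> 'a set set \<Rightarrow> enat" where
  "b_tR V E = (if \<exists>E'. btR_candidate V E E'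
               then enat (LEAST k. \<exists>E'. btR_candidate V E E' \<and> card E' = k)
               else \<infinity>)"

definition btR_set :: "'a set \<Rightarrow> 'a set set \<Rightarrow> 'a set set \<Rightarrow> bool" where
  "btR_set V E B \<longleftrightarrow> btR_candidate V E B \<and> enat (card B) = b_tR V E"

text \<open>Bistar S_{r,s} on nat: centres 0 and 1, leaves 2..r+1 of 0, leaves r+2..r+s+1 of 1.\<close>
definition bistar_V :: "nat \<Rightarrow> nat \<Rightarrow> nat set" where
  "bistar_V r s = {0..r + s + 1}"

definition bistar_E :: "nat \<Rightarrow> nat \<Rightarrow> nat set set" where
  "bistar_E r s = {{0, 1}} \<union> {{0, i} | i. 2 \<le> i \<and> i \<le> r + 1}
                   \<union> {{1, i} | i. r + 2 \<le> i \<and> i \<le> r + s + 1}"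

end

theory Submission
  imports Defs
begin


definition goodv :: "'a set \<Rightarrow> 'a set set \<Rightarrow> ('a \<Rightarrow> nat) \<Rightarrow> 'a \<Rightarrow> bool" where
  "goodv V E f x \<longleftrightarrow> (f x = 0 \<longrightarrow> (\<exists>w\<in>V. {w,x}\<in>E \<and> f w = 2)) \<and> (0 < f x \<longrightarrow> (\<exists>w\<in>V. {w,x}\<in>E \<and> 0 < f w))"

lemma trdf_iff: "trdf V E f \<longleftrightarrow> (\<forall>x\<in>V. f x \<le> 2) \<and> (\<forall>x\<in>V. goodv V E f x)"
  by (auto simp: trdf_def goodv_def)

lemma gamma_le: "trdf V E f \<Longrightarrow> gamma_tR V E \<le> weight V f"
  unfolding gamma_tR_def by (rule Least_le) blast

lemma gamma_att: "trdf V E h \<Longrightarrow> \<exists>f. trdf V E f \<and> weight V f = gamma_tR V E"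
  unfolding gamma_tR_def by (rule LeastI_ex) blast

lemma gamma_eq: "trdf V E f \<Longrightarrow> weight V f \<le> w \<Longrightarrow> (\<And>g. trdf V E g \<Longrightarrow> w \<le> weight V g) \<Longrightarrow> gamma_tR V E = w"
  by (metis gamma_att gamma_le le_antisym order_trans)

lemma trdf_2: "(\<forall>e\<in>E. e \<subseteq> V) \<Longrightarrow> no_isolated V E \<Longrightarrow> trdf V E (\<lambda>_. 2)"
  unfolding trdf_def no_isolated_def by (metis insert_subset numeral_le_iff order_refl zero_less_numeral)

lemma repair:
  assumes fin: "finite V" and le2: "\<forall>y\<in>V. f y \<le> 2" and xV: "x\<in>V" and wV: "w\<in>V"
    and edge: "{w,x}\<in>E" and wx: "w\<noteq>x"
  shows "\<exists>g. (\<forall>y\<in>V. g y \<le> 2) \<and> goodv V E g x \<and> (\<forall>y\<in>V. goodv V E f y \<longrightarrow> goodv V E g y)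
     \<and> (\<forall>y. f y \<le> g y) \<and> weight V g \<le> weight V f + (if goodv V E f x then 0 else if f x = 0 then 2 else 1)"
proof (cases "goodv V E f x")
  case True then show ?thesis by (rule_tac x=f in exI) (auto simp: le2)
next
  case False
  define g where "g = f(x := max (f x) 1, w := max (f w) 1)"
  have ge: "\<forall>y. f y \<le> g y" unfolding g_def by auto
  have g2: "\<forall>y\<in>V. g y \<le> 2" using le2 xV wV unfolding g_def by auto
  have gx: "g x \<ge> 1" "g w \<ge> 1" unfolding g_def using wx by auto
  have e2: "{x,w} \<in> E" using edge by (simp add: insert_commute)
  have goodx: "goodv V E g x" unfolding goodv_def using gx wV edge by auto
  have pres: "\<forall>y\<in>V. goodv V E f y \<longrightarrow> goodv V E g y"
  proof (intro ballI impI)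
    fix y assume yV: "y \<in> V" and gy: "goodv V E f y"
    show "goodv V E g y"
    proof (cases "g y = 0")
      case True
      then have "f y = 0" using ge by (metis le_zero_eq)
      then obtain a where "a\<in>V" "{a,y}\<in>E" "f a = 2" using gy unfolding goodv_def by auto
      moreover have "g a = 2" using ge g2 \<open>a\<in>V\<close> \<open>f a = 2\<close> by (metis le_antisym)
      ultimately show ?thesis unfolding goodv_def using True by auto
    next
      case False
      show ?thesis
      proof (cases "f y = 0")
        case True
        then have "y = x \<or> y = w" using False unfolding g_def by (auto split: if_splits)
        then show ?thesis unfolding goodv_def using gx xV wV edge e2 by auto
      next
        case False
        then obtain a where "a\<in>V" "{a,y}\<in>E" "0 < f a" using gy unfolding goodv_def by auto
        moreover have "0 < g a" using ge \<open>0 < f a\<close> by (metis less_le_trans)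
        ultimately show ?thesis unfolding goodv_def using \<open>g y \<noteq> 0\<close> by auto
      qed
    qed
  qed
  have w: "weight V g \<le> weight V f + (if f x = 0 then 2 else 1)"
  proof (cases "f x = 0")
    case True
    have "\<forall>y\<in>V. g y \<le> f y + (if y = x then 1 else 0) + (if y = w then 1 else 0)"
      unfolding g_def using True wx by auto
    then have "weight V g \<le> (\<Sum>y\<in>V. f y + (if y = x then 1 else 0) + (if y = w then 1 else 0))"
      unfolding weight_def by (intro sum_mono) blast
    also have "\<dots> = weight V f + 2" using xV wV fin unfolding weight_def by (simp add: sum.distrib)
    finally show ?thesis using True by simp
  next
    case False
    have "\<forall>y\<in>V. g y \<le> f y + (if y = w then 1 else 0)"
      unfolding g_def using False wx by auto
    then have "weight V g \<le> (\<Sum>y\<in>V. f y + (if y = w then 1 else 0))"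
      unfolding weight_def by (intro sum_mono) blast
    also have "\<dots> = weight V f + 1" using xV wV fin unfolding weight_def by (simp add: sum.distrib)
    finally show ?thesis using False by simp
  qed
  show ?thesis using g2 goodx pres ge w False by (rule_tac x=g in exI) auto
qed

lemma goodv_remove: "goodv V E f y \<Longrightarrow> y \<noteq> u \<Longrightarrow> y \<noteq> v \<Longrightarrow> goodv V (E - {{u,v}}) f y"
  unfolding goodv_def by (auto simp: doubleton_eq_iff)

lemma part1:
  assumes gr: "graph V E" and ni: "no_isolated V E" and bs: "btR_set V E B"
  shows "gamma_tR V E + 1 \<le> gamma_tR V (E - B) \<and> gamma_tR V (E - B) \<le> gamma_tR V E + 2"
proof -
  have cand: "btR_candidate V E B" using bs unfolding btR_set_def by auto
  then have BE: "B \<subseteq> E" and niB: "no_isolated V (E - B)" and lt: "gamma_tR V E < gamma_tR V (E - B)"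
    unfolding btR_candidate_def by auto
  have finV: "finite V" and Esub: "\<forall>e\<in>E. e \<subseteq> V \<and> card e = 2" using gr unfolding graph_def by auto
  have "E \<subseteq> Pow V" using Esub by auto
  then have finE: "finite E" using finV by (meson finite_Pow_iff finite_subset)
  then have finB: "finite B" using BE finite_subset by blast
  have "B \<noteq> {}" using lt by auto
  then obtain e where eB: "e \<in> B" by auto
  then have eE: "e \<in> E" using BE by auto
  then obtain u v where euv: "e = {u,v}" and uv: "u \<noteq> v" using Esub by (meson card_2_iff)
  have uV: "u \<in> V" and vV: "v \<in> V" using Esub eE euv by auto
  define E' where "E' = E - (B - {e})"
  have E2: "E - B = E' - {{u,v}}" unfolding E'_def using eB euv by auto
  have niE': "no_isolated V E'" using niB unfolding no_isolated_def E'_def by blast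
  have ncand: "\<not> btR_candidate V E (B - {e})"
  proof
    assume c: "btR_candidate V E (B - {e})"
    have ex: "\<exists>E'. btR_candidate V E E'" using cand by blast
    have "(LEAST k. \<exists>E'. btR_candidate V E E' \<and> card E' = k) \<le> card (B - {e})"
      by (rule Least_le) (use c in blast)
    moreover have "card (B - {e}) < card B" using finB eB by (metis card_Diff1_less)
    moreover have "enat (card B) = enat (LEAST k. \<exists>E'. btR_candidate V E E' \<and> card E' = k)"
      using bs ex unfolding btR_set_def b_tR_def by auto
    ultimately show False by simp
  qed
  have le: "gamma_tR V E' \<le> gamma_tR V E"
    using ncand niE' BE unfolding btR_candidate_def E'_def by auto
  have "trdf V E' (\<lambda>_. 2)" by (rule trdf_2) (use Esub niE' in \<open>auto simp: E'_def\<close>)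
  then obtain f where ft: "trdf V E' f" and fw: "weight V f = gamma_tR V E'" using gamma_att by blast
  have f2: "\<forall>y\<in>V. f y \<le> 2" and fg: "\<forall>y\<in>V. goodv V E' f y" using ft unfolding trdf_iff by auto
  have ue: "{u,v} \<in> E'" using eB eE euv unfolding E'_def by auto
  obtain a where a: "{a,u} \<in> E - B" using niB uV unfolding no_isolated_def by blast
  have aV: "a \<in> V" and au: "a \<noteq> u" using a Esub by auto
  obtain b where b: "{b,v} \<in> E - B" using niB vV unfolding no_isolated_def by blast
  have bV: "b \<in> V" and bv: "b \<noteq> v" using b Esub by auto
  let ?E2 = "E' - {{u,v}}"
  have aE2: "{a,u} \<in> ?E2" and bE2: "{b,v} \<in> ?E2" using a b E2 by simp_all
  obtain g1 where g1: "(\<forall>y\<in>V. g1 y \<le> 2)" "goodv V ?E2 g1 u" "(\<forall>y\<in>V. goodv V ?E2 f y \<longrightarrow> goodv V ?E2 g1 y)"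
     "(\<forall>y. f y \<le> g1 y)" "weight V g1 \<le> weight V f + (if goodv V ?E2 f u then 0 else if f u = 0 then 2 else 1)"
    using repair[OF finV f2 uV aV aE2 au] by blast
  obtain g2 where g2: "(\<forall>y\<in>V. g2 y \<le> 2)" "goodv V ?E2 g2 v" "(\<forall>y\<in>V. goodv V ?E2 g1 y \<longrightarrow> goodv V ?E2 g2 y)"
     "(\<forall>y. g1 y \<le> g2 y)" "weight V g2 \<le> weight V g1 + (if goodv V ?E2 g1 v then 0 else if g1 v = 0 then 2 else 1)"
    using repair[OF finV g1(1) vV bV bE2 bv] by blast
  have "trdf V ?E2 g2" unfolding trdf_iff
  proof (intro conjI ballI)
    fix y assume yV: "y \<in> V"
    show "g2 y \<le> 2" using g2 yV by auto
    show "goodv V ?E2 g2 y"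
    proof (cases "y = v")
      case True then show ?thesis using g2(2) by simp
    next
      case False
      show ?thesis
      proof (cases "y = u")
        case True then show ?thesis using g1(2) g2(3) uV by blast
      next
        case False
        have "goodv V E' f y" using fg yV by blast
        then have "goodv V ?E2 f y" using False \<open>y \<noteq> v\<close> by (rule goodv_remove)
        then show ?thesis using g1(3) g2(3) yV by blast
      qed
    qed
  qed
  then have "gamma_tR V ?E2 \<le> weight V g2" by (rule gamma_le)
  moreover have "weight V g2 \<le> weight V f + 2"
  proof (cases "goodv V ?E2 f u")
    case True then show ?thesis using g1(5) g2(5) by (auto split: if_splits)
  next
    case False
    note nu = False
    have gu: "goodv V E' f u" using fg uV by auto
    show ?thesis
    proof (cases "f u = 0")
      case True
      obtain w where w: "w \<in> V" "{w,u} \<in> E'" "f w = 2" using gu True unfolding goodv_def by auto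
      have "{w,u} \<notin> ?E2" using nu True w unfolding goodv_def by auto
      then have "w = v" using w uv by (auto simp: doubleton_eq_iff)
      then have fv: "f v = 2" using w by simp
      obtain w' where w': "w' \<in> V" "{w',v} \<in> E'" "0 < f w'" using fg vV fv unfolding goodv_def by force
      have "w' \<noteq> u" using w' True by auto
      then have "{w',v} \<in> ?E2" using w' uv by (auto simp: doubleton_eq_iff)
      then have "goodv V ?E2 f v" using w' fv unfolding goodv_def by auto
      then have "goodv V ?E2 g1 v" using g1(3) vV by blast
      then show ?thesis using g1(5) g2(5) nu True by auto
    next
      case False
      obtain w where w: "w \<in> V" "{w,u} \<in> E'" "0 < f w" using gu False unfolding goodv_def by auto
      have "{w,u} \<notin> ?E2" using nu False w unfolding goodv_def by auto
      then have "w = v" using w uv by (auto simp: doubleton_eq_iff)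
      then have "0 < g1 v" using w g1(4) by (metis less_le_trans)
      then show ?thesis using g1(5) g2(5) nu False by (auto split: if_splits)
    qed
  qed
  ultimately show ?thesis using lt le fw E2 by simp
qed



lemma bE: "{a,b} \<in> bistar_E p q \<longleftrightarrow> ({a,b} = {0,1} \<or> (a = 0 \<and> 2 \<le> b \<and> b \<le> p+1) \<or> (b = 0 \<and> 2 \<le> a \<and> a \<le> p+1)
   \<or> (a = 1 \<and> p+2 \<le> b \<and> b \<le> p+q+1) \<or> (b = 1 \<and> p+2 \<le> a \<and> a \<le> p+q+1))"
  unfolding bistar_E_def by (auto simp: doubleton_eq_iff)

lemma bE_cases: "e \<in> bistar_E p q \<Longrightarrow> e = {0,1} \<or> (\<exists>i. e = {0,i} \<and> 2 \<le> i \<and> i \<le> p+1) \<or> (\<exists>i. e = {1,i} \<and> p+2 \<le> i \<and> i \<le> p+q+1)"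
  unfolding bistar_E_def by auto

lemma leaf: "trdf V E f \<Longrightarrow> l \<in> V \<Longrightarrow> (\<forall>a\<in>V. {a,l}\<in>E \<longrightarrow> a = c) \<Longrightarrow> 2 \<le> f c + f l"
  unfolding trdf_def by (cases "f l = 0") fastforce+

lemma trdf_le2: "trdf V E f \<Longrightarrow> v \<in> V \<Longrightarrow> f v \<le> 2" unfolding trdf_def by blast
lemma trdf_zero: "trdf V E f \<Longrightarrow> v \<in> V \<Longrightarrow> f v = 0 \<Longrightarrow> \<exists>u\<in>V. {u,v}\<in>E \<and> f u = 2" unfolding trdf_def by blast
lemma trdf_pos: "trdf V E f \<Longrightarrow> v \<in> V \<Longrightarrow> 0 < f v \<Longrightarrow> \<exists>u\<in>V. {u,v}\<in>E \<and> 0 < f u" unfolding trdf_def by blast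

lemma star: assumes t: "trdf V E f" and cV: "c \<in> V" and LV: "L \<subseteq> V" and fin: "finite L"
  and lf: "\<forall>l\<in>L. \<forall>a\<in>V. {a,l}\<in>E \<longrightarrow> a = c" and cn: "\<forall>a\<in>V. {a,c}\<in>E \<longrightarrow> a \<in> L"
  and l12: "l1 \<in> L" "l2 \<in> L" "l1 \<noteq> l2"
  shows "3 \<le> f c + sum f L"
proof -
  have f2: "f c \<le> 2" using trdf_le2[OF t cV] .
  have nz: "f c \<noteq> 0"
  proof
    assume z: "f c = 0"
    then obtain a where a: "a \<in> V" "{a,c} \<in> E" "f a = 2" using trdf_zero[OF t cV] by blast
    then have aL: "a \<in> L" using cn by blast
    have "0 < f a" using a by simp
    then obtain b where b: "b \<in> V" "{b,a} \<in> E" "0 < f b" using trdf_pos[OF t a(1)] by blast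
    then have "b = c" using lf aL by blast
    then show False using b z by simp
  qed
  have c1: ?thesis if o: "f c = 1"
  proof -
    have nz: "f l \<noteq> 0" if lL: "l \<in> L" for l
    proof
      assume "f l = 0"
      then obtain a where a: "a \<in> V" "{a,l} \<in> E" "f a = 2" using trdf_zero[OF t] lL LV by blast
      moreover have "a = c" using lf lL a by blast
      ultimately show False using o by simp
    qed
    have "f l1 \<ge> 1" "f l2 \<ge> 1" using nz[OF l12(1)] nz[OF l12(2)] by simp_all
    then have "f l1 + f l2 \<ge> 2" by simp
    moreover have "f l1 + f l2 = sum f {l1,l2}" using l12 by simp
    moreover have "sum f {l1,l2} \<le> sum f L" using l12 fin by (intro sum_mono2) auto
    ultimately show ?thesis using o by simp
  qed
  have c2: ?thesis if o: "f c = 2"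
  proof -
    obtain a where a: "a \<in> V" "{a,c} \<in> E" "0 < f a" using trdf_pos[OF t cV] o by auto
    then have "a \<in> L" using cn by blast
    then have "f a \<le> sum f L" using fin by (intro member_le_sum) auto
    then show ?thesis using o a by simp
  qed
  have "f c = 1 \<or> f c = 2" using f2 nz by linarith
  then show ?thesis using c1 c2 by blast
qed

lemma wdecomp: "weight (bistar_V p q) f = f 0 + f 1 + sum f {2..p+1} + sum f {p+2..p+q+1}"
proof -
  have "bistar_V p q = {0} \<union> {1} \<union> {2..p+1} \<union> {p+2..p+q+1}" unfolding bistar_V_def by auto
  then show ?thesis unfolding weight_def by (simp add: sum.union_disjoint)
qed



lemma leaf0: "2 \<le> l \<Longrightarrow> l \<le> p+1 \<Longrightarrow> {a,l} \<in> bistar_E p q \<Longrightarrow> a = 0"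
  by (auto simp: bE doubleton_eq_iff)
lemma leaf1: "p+2 \<le> l \<Longrightarrow> {a,l} \<in> bistar_E p q \<Longrightarrow> a = 1"
  by (auto simp: bE doubleton_eq_iff)
lemma nb0: "{a,0} \<in> bistar_E p q - {{0,1}} \<Longrightarrow> 2 \<le> a \<and> a \<le> p+1"
  by (auto simp: bE doubleton_eq_iff)
lemma nb1: "{a,1} \<in> bistar_E p q - {{0,1}} \<Longrightarrow> p+2 \<le> a \<and> a \<le> p+q+1"
  by (auto simp: bE doubleton_eq_iff)

lemma lowG: assumes "1 \<le> p" "1 \<le> q" and t: "trdf (bistar_V p q) (bistar_E p q) f"
  shows "4 \<le> weight (bistar_V p q) f"
proof -
  have a: "2 \<le> f 0 + f 2"
    by (rule leaf[OF t]) (use assms(1) leaf0[of 2 p] in \<open>auto simp: bistar_V_def\<close>)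
  have b: "2 \<le> f 1 + f (p+2)"
    by (rule leaf[OF t]) (use assms leaf1[of p "p+2"] in \<open>auto simp: bistar_V_def\<close>)
  have "f 2 \<le> sum f {2..p+1}" using assms by (intro member_le_sum) auto
  moreover have "f (p+2) \<le> sum f {p+2..p+q+1}" using assms by (intro member_le_sum) auto
  ultimately show ?thesis using a b by (simp add: wdecomp)
qed

lemma sideconds:
  "\<forall>l\<in>{2..p+1}. \<forall>a\<in>bistar_V p q. {a,l} \<in> bistar_E p q - {{0,1}} \<longrightarrow> a = 0"
  "\<forall>l\<in>{p+2..p+q+1}. \<forall>a\<in>bistar_V p q. {a,l} \<in> bistar_E p q - {{0,1}} \<longrightarrow> a = 1"
  "\<forall>a\<in>bistar_V p q. {a,0} \<in> bistar_E p q - {{0,1}} \<longrightarrow> a \<in> {2..p+1}"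
  "\<forall>a\<in>bistar_V p q. {a,1} \<in> bistar_E p q - {{0,1}} \<longrightarrow> a \<in> {p+2..p+q+1}"
  subgoal using leaf0[of _ p _ q] by (meson DiffD1 atLeastAtMost_iff)
  subgoal using leaf1[of p _ _ q] by (meson DiffD1 atLeastAtMost_iff)
  subgoal using nb0[of _ p q] by simp
  subgoal using nb1[of _ p q] by simp
  done

lemma lowGB: assumes "2 \<le> p" "2 \<le> q" and t: "trdf (bistar_V p q) (bistar_E p q - {{0,1}}) f"
  shows "6 \<le> weight (bistar_V p q) f"
proof -
  have a: "3 \<le> f 0 + sum f {2..p+1}"
    by (rule star[OF t, of 0 _ 2 3]) (use assms sideconds[of p q] in \<open>auto simp: bistar_V_def\<close>)
  have b: "3 \<le> f 1 + sum f {p+2..p+q+1}"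
    by (rule star[OF t, of 1 _ "p+2" "p+3"]) (use assms sideconds[of p q] in \<open>auto simp: bistar_V_def\<close>)
  show ?thesis using a b wdecomp[of p q f] by linarith
qed

lemma lowGB1: assumes "2 \<le> q" and t: "trdf (bistar_V 1 q) (bistar_E 1 q - {{0,1}}) f"
  shows "5 \<le> weight (bistar_V 1 q) f"
proof -
  have a: "2 \<le> f 0 + f 2"
    by (rule leaf[OF t]) (use leaf0[of 2 1 _ q] in \<open>auto simp: bistar_V_def\<close>)
  have b: "3 \<le> f 1 + sum f {1+2..1+q+1}"
    by (rule star[OF t, of 1 _ 3 4]) (use assms sideconds[of 1 q] in \<open>auto simp: bistar_V_def\<close>)
  have e1: "{2..1+1::nat} = {2}" by simp
  have e: "sum f {2..1+1::nat} = f 2" unfolding e1 by simp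
  show ?thesis using a b e wdecomp[of 1 q f] by linarith
qed



lemma trdfI: "(\<forall>v\<in>V. f v \<le> 2) \<Longrightarrow> (\<forall>v\<in>V. w v \<in> V \<and> {w v, v} \<in> E \<and> (f v = 0 \<longrightarrow> f (w v) = 2) \<and> (0 < f v \<longrightarrow> 0 < f (w v))) \<Longrightarrow> trdf V E f"
  unfolding trdf_def by metis

lemma upG: assumes "1 \<le> p" "1 \<le> q"
  shows "trdf (bistar_V p q) (bistar_E p q) (\<lambda>x. if x \<le> 1 then 2 else 0)" (is "trdf ?V ?E ?f")
    and "weight (bistar_V p q) (\<lambda>x. if x \<le> 1 then 2 else 0) = 4"
proof -
  define w where "w = (\<lambda>v::nat. if v = 0 then 1 else if v = 1 then 0 else if v \<le> p+1 then 0 else (1::nat))"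
  show "trdf ?V ?E ?f"
  proof (rule trdfI[where w = w])
    show "\<forall>v\<in>?V. ?f v \<le> 2" by simp
    show "\<forall>v\<in>?V. w v \<in> ?V \<and> {w v, v} \<in> ?E \<and> (?f v = 0 \<longrightarrow> ?f (w v) = 2) \<and> (0 < ?f v \<longrightarrow> 0 < ?f (w v))"
      using assms by (auto simp: bE bistar_V_def insert_commute w_def)
  qed
  show "weight ?V ?f = 4" by (simp add: wdecomp)
qed

lemma upGB: assumes "2 \<le> p" "2 \<le> q"
  defines "f \<equiv> (\<lambda>x::nat. if x \<le> 1 then 2 else if x = 2 \<or> x = p+2 then (1::nat) else 0)"
  shows "trdf (bistar_V p q) (bistar_E p q - {{0,1}}) f" (is "trdf ?V ?E ?f")
    and "weight (bistar_V p q) f = 6"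
proof -
  define w where "w = (\<lambda>v::nat. if v = 0 then 2 else if v = 1 then p+2 else if v \<le> p+1 then 0 else (1::nat))"
  show "trdf ?V ?E ?f"
  proof (rule trdfI[where w = w])
    show "\<forall>v\<in>?V. ?f v \<le> 2" by (simp add: f_def)
    show "\<forall>v\<in>?V. w v \<in> ?V \<and> {w v, v} \<in> ?E \<and> (?f v = 0 \<longrightarrow> ?f (w v) = 2) \<and> (0 < ?f v \<longrightarrow> 0 < ?f (w v))"
      using assms(1,2) by (auto simp: bE bistar_V_def insert_commute w_def f_def doubleton_eq_iff)
  qed
  have s1: "sum f {2..p+1} = sum (\<lambda>x. if x = 2 then 1 else 0) {2..p+1}"
    by (rule sum.cong) (auto simp: f_def)
  have s2: "sum f {p+2..p+q+1} = sum (\<lambda>x. if x = p+2 then 1 else 0) {p+2..p+q+1}"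
    by (rule sum.cong) (auto simp: f_def)
  have "sum f {2..p+1} = 1" unfolding s1 using assms(1) by simp
  moreover have "sum f {p+2..p+q+1} = 1" unfolding s2 using assms(2) by simp
  ultimately show "weight ?V f = 6" using wdecomp[of p q f] by (simp add: f_def)
qed

lemma upGB1: assumes "2 \<le> q"
  defines "f \<equiv> (\<lambda>x::nat. if x = 1 then 2 else if x = 0 \<or> x = 2 \<or> x = 3 then (1::nat) else 0)"
  shows "trdf (bistar_V 1 q) (bistar_E 1 q - {{0,1}}) f" (is "trdf ?V ?E ?f")
    and "weight (bistar_V 1 q) f = 5"
proof -
  define w where "w = (\<lambda>v::nat. if v = 0 then 2 else if v = 1 then 3 else if v = 2 then 0 else (1::nat))"
  show "trdf ?V ?E ?f"
  proof (rule trdfI[where w = w])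
    show "\<forall>v\<in>?V. ?f v \<le> 2" by (simp add: f_def)
    show "\<forall>v\<in>?V. w v \<in> ?V \<and> {w v, v} \<in> ?E \<and> (?f v = 0 \<longrightarrow> ?f (w v) = 2) \<and> (0 < ?f v \<longrightarrow> 0 < ?f (w v))"
      using assms(1) by (auto simp: bE bistar_V_def insert_commute w_def f_def doubleton_eq_iff)
  qed
  have e1: "{2..1+1::nat} = {2}" by simp
  have s1: "sum f {2..1+1} = 1" unfolding e1 by (simp add: f_def)
  have s2: "sum f {1+2..1+q+1} = sum (\<lambda>x. if x = 3 then 1 else 0) {1+2..1+q+1}"
    by (rule sum.cong) (auto simp: f_def)
  have "sum f {1+2..1+q+1} = 1" unfolding s2 using assms(1) by simp
  then show "weight ?V f = 5" using wdecomp[of 1 q f] s1 by (simp add: f_def)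
qed



lemma gammaG: assumes "1 \<le> p" "1 \<le> q" shows "gamma_tR (bistar_V p q) (bistar_E p q) = 4"
proof (rule gamma_eq[OF upG(1)[OF assms]])
  show "weight (bistar_V p q) (\<lambda>x. if x \<le> 1 then 2 else 0) \<le> 4" using upG(2)[OF assms] by (rule eq_imp_le)
  show "4 \<le> weight (bistar_V p q) g" if "trdf (bistar_V p q) (bistar_E p q) g" for g
    by (rule lowG[OF assms that])
qed
lemma gammaGB: assumes "2 \<le> p" "2 \<le> q" shows "gamma_tR (bistar_V p q) (bistar_E p q - {{0,1}}) = 6"
proof (rule gamma_eq[OF upGB(1)[OF assms]])
  show "weight (bistar_V p q) (\<lambda>x::nat. if x \<le> 1 then 2 else if x = 2 \<or> x = p+2 then (1::nat) else 0) \<le> 6"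
    using upGB(2)[OF assms] by (rule eq_imp_le)
  show "6 \<le> weight (bistar_V p q) g" if "trdf (bistar_V p q) (bistar_E p q - {{0,1}}) g" for g
    by (rule lowGB[OF assms that])
qed
lemma gammaGB1: assumes "2 \<le> q" shows "gamma_tR (bistar_V 1 q) (bistar_E 1 q - {{0,1}}) = 5"
proof (rule gamma_eq[OF upGB1(1)[OF assms]])
  show "weight (bistar_V 1 q) (\<lambda>x::nat. if x = 1 then 2 else if x = 0 \<or> x = 2 \<or> x = 3 then (1::nat) else 0) \<le> 5"
    using upGB1(2)[OF assms] by (rule eq_imp_le)
  show "5 \<le> weight (bistar_V 1 q) g" if "trdf (bistar_V 1 q) (bistar_E 1 q - {{0,1}}) g" for g
    by (rule lowGB1[OF assms that])
qed

lemma E0i: "2 \<le> i \<Longrightarrow> i \<le> p+1 \<Longrightarrow> {0,i} \<in> bistar_E p q" unfolding bistar_E_def by (rule UnI1, rule UnI2) auto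
lemma E1i: "p+2 \<le> i \<Longrightarrow> i \<le> p+q+1 \<Longrightarrow> {1,i} \<in> bistar_E p q" unfolding bistar_E_def by (rule UnI2) auto

lemma noiso: assumes "1 \<le> p" "1 \<le> q" shows "no_isolated (bistar_V p q) (bistar_E p q - {{0,1}})"
  unfolding no_isolated_def
proof
  fix v assume v: "v \<in> bistar_V p q"
  then have vle: "v \<le> p+q+1" by (simp add: bistar_V_def)
  have "\<exists>u. {u, v} \<in> bistar_E p q \<and> {u,v} \<noteq> {0,1}"
  proof (cases "v = 0")
    case True
    have "{0, 2} \<in> bistar_E p q" using assms by (intro E0i) simp_all
    then have A: "{2, v} \<in> bistar_E p q" using True by (metis insert_commute)
    have B: "{2::nat, v} \<noteq> {0,1}" using True by (simp add: doubleton_eq_iff)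
    have "{2, v} \<in> bistar_E p q \<and> {2, v} \<noteq> {0,1}" using A B by (rule conjI)
    then show ?thesis by (rule exI)
  next
    case v0: False
    show ?thesis
    proof (cases "v = 1")
      case True
      have "{1, p+2} \<in> bistar_E p q" using assms by (intro E1i) simp_all
      then have A: "{p+2, v} \<in> bistar_E p q" using True by (metis insert_commute)
      have B: "{p+2, v} \<noteq> {0,1}" using True by (simp add: doubleton_eq_iff)
      have "{p+2, v} \<in> bistar_E p q \<and> {p+2, v} \<noteq> {0,1}" using A B by (rule conjI)
      then show ?thesis by (rule exI)
    next
      case v1: False
      show ?thesis
      proof (cases "v \<le> p+1")
        case True
        have A: "{0, v} \<in> bistar_E p q" using True v0 v1 by (intro E0i) simp_all
        have B: "{0, v} \<noteq> {0,1}" using v0 v1 by (simp add: doubleton_eq_iff)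
        have "{0, v} \<in> bistar_E p q \<and> {0, v} \<noteq> {0,1}" using A B by (rule conjI)
        then show ?thesis by (rule exI)
      next
        case False
        have A: "{1, v} \<in> bistar_E p q" using False vle by (intro E1i) simp_all
        have B: "{1, v} \<noteq> {0,1}" using v0 v1 by (simp add: doubleton_eq_iff)
        have "{1, v} \<in> bistar_E p q \<and> {1, v} \<noteq> {0,1}" using A B by (rule conjI)
        then show ?thesis by (rule exI)
      qed
    qed
  qed
  then obtain u where u1: "{u, v} \<in> bistar_E p q" and u2: "{u,v} \<noteq> {0,1}" by (elim exE conjE)
  have "{u,v} \<notin> {{0,1}}" using u2 by (simp only: singleton_iff not_False_eq_True)
  then have "{u, v} \<in> bistar_E p q - {{0,1}}" by (rule DiffI[OF u1])
  then show "\<exists>u. {u, v} \<in> bistar_E p q - {{0,1}}" by (rule exI)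
qed

lemma E01: "{0,1} \<in> bistar_E p q" unfolding bistar_E_def by (rule UnI1, rule UnI1) simp

lemma candchar: assumes "1 \<le> p" "1 \<le> q" and c: "btR_candidate (bistar_V p q) (bistar_E p q) B"
  shows "B = {{0,1}}"
proof -
  have BE: "B \<subseteq> bistar_E p q" and ni: "no_isolated (bistar_V p q) (bistar_E p q - B)"
    and lt: "gamma_tR (bistar_V p q) (bistar_E p q) < gamma_tR (bistar_V p q) (bistar_E p q - B)"
    using c unfolding btR_candidate_def by auto
  have "e = {0,1}" if eB: "e \<in> B" for e
  proof -
    have "e \<in> bistar_E p q" using eB BE by auto
    then consider "e = {0,1}" | i where "e = {0,i}" "2 \<le> i" "i \<le> p+1" | i where "e = {1,i}" "p+2 \<le> i" "i \<le> p+q+1"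
      using bE_cases by blast
    then show ?thesis
    proof cases
      case 1 then show ?thesis .
    next
      case 2
      then have "i \<in> bistar_V p q" by (simp add: bistar_V_def)
      then obtain a where a: "{a,i} \<in> bistar_E p q - B" using ni unfolding no_isolated_def by blast
      then have "a = 0" using leaf0[of i p a q] 2 by blast
      then have "e \<notin> B" using a 2(1) by simp
      then show ?thesis using eB by contradiction
    next
      case 3
      then have "i \<in> bistar_V p q" by (simp add: bistar_V_def)
      then obtain a where a: "{a,i} \<in> bistar_E p q - B" using ni unfolding no_isolated_def by blast
      then have "a = 1" using leaf1[of p i a q] 3 by blast
      then have "e \<notin> B" using a 3(1) by simp
      then show ?thesis using eB by contradiction
    qed
  qed
  moreover have "B \<noteq> {}" proof assume "B = {}" then show False using lt by simp qed
  ultimately show ?thesis by blast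
qed

lemma btR_fin: "btR_candidate V E B \<Longrightarrow> b_tR V E \<noteq> \<infinity>"
  unfolding b_tR_def by auto

lemma cand01: assumes "1 \<le> p" "1 \<le> q"
  and "gamma_tR (bistar_V p q) (bistar_E p q) < gamma_tR (bistar_V p q) (bistar_E p q - {{0,1}})"
  shows "btR_candidate (bistar_V p q) (bistar_E p q) {{0,1}}"
  unfolding btR_candidate_def using assms(3) noiso[OF assms(1,2)] E01[of p q] by simp

theorem mainTheorem4:
  shows "(\<forall>(V :: 'a set) E B. graph V E \<and> no_isolated V E \<and> b_tR V E \<noteq> \<infinity> \<and> btR_set V E B \<longrightarrow>
            gamma_tR V E + 1 \<le> gamma_tR V (E - B) \<and> gamma_tR V (E - B) \<le> gamma_tR V E + 2)
     \<and> (\<forall>p q. 2 \<le> p \<and> p \<le> q \<longrightarrow>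
            b_tR (bistar_V p q) (bistar_E p q) \<noteq> \<infinity> \<and>
            (\<forall>B. btR_set (bistar_V p q) (bistar_E p q) B \<longrightarrow>
               gamma_tR (bistar_V p q) (bistar_E p q - B) = gamma_tR (bistar_V p q) (bistar_E p q) + 2))
     \<and> (\<forall>q. 2 \<le> q \<longrightarrow>
            b_tR (bistar_V 1 q) (bistar_E 1 q) \<noteq> \<infinity> \<and>
            (\<forall>B. btR_set (bistar_V 1 q) (bistar_E 1 q) B \<longrightarrow>
               gamma_tR (bistar_V 1 q) (bistar_E 1 q - B) = gamma_tR (bistar_V 1 q) (bistar_E 1 q) + 1))"
proof (intro conjI allI impI)
  fix V :: "'a set" and E B
  assume h: "graph V E \<and> no_isolated V E \<and> b_tR V E \<noteq> \<infinity> \<and> btR_set V E B"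
  have "gamma_tR V E + 1 \<le> gamma_tR V (E - B) \<and> gamma_tR V (E - B) \<le> gamma_tR V E + 2"
    by (rule part1) (use h in simp_all)
  then show "gamma_tR V E + 1 \<le> gamma_tR V (E - B)" "gamma_tR V (E - B) \<le> gamma_tR V E + 2"
    by simp_all
next
  fix p q :: nat assume pq: "2 \<le> p \<and> p \<le> q"
  then have p1: "1 \<le> p" "1 \<le> q" "2 \<le> p" "2 \<le> q" by auto
  have c: "btR_candidate (bistar_V p q) (bistar_E p q) {{0,1}}"
    by (rule cand01[OF p1(1,2)]) (unfold gammaG[OF p1(1,2)] gammaGB[OF p1(3,4)], simp)
  then show "b_tR (bistar_V p q) (bistar_E p q) \<noteq> \<infinity>" by (rule btR_fin)
  fix B assume "btR_set (bistar_V p q) (bistar_E p q) B"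
  then have Bq: "B = {{0,1}}" using candchar[OF p1(1,2)] unfolding btR_set_def by blast
  show "gamma_tR (bistar_V p q) (bistar_E p q - B) = gamma_tR (bistar_V p q) (bistar_E p q) + 2"
    unfolding Bq gammaG[OF p1(1,2)] gammaGB[OF p1(3,4)] by simp
next
  fix q :: nat assume q: "2 \<le> q"
  then have p1: "1 \<le> (1::nat)" "1 \<le> q" by auto
  have c: "btR_candidate (bistar_V 1 q) (bistar_E 1 q) {{0,1}}"
    by (rule cand01[OF p1]) (unfold gammaG[OF p1] gammaGB1[OF q], simp)
  then show "b_tR (bistar_V 1 q) (bistar_E 1 q) \<noteq> \<infinity>" by (rule btR_fin)
  fix B assume "btR_set (bistar_V 1 q) (bistar_E 1 q) B"
  then have Bq: "B = {{0,1}}" using candchar[OF p1] unfolding btR_set_def by blast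
  show "gamma_tR (bistar_V 1 q) (bistar_E 1 q - B) = gamma_tR (bistar_V 1 q) (bistar_E 1 q) + 1"
    unfolding Bq gammaG[OF p1] gammaGB1[OF q] by simp
qed

end
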